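(* Let $A$ be a separable algebraically simple $C^*$-algebra with non-empty compact $T(A)$. Suppose that $F_1\subset F_2\subset\partial_e(T(A))$ are compact subsets such that for all $x\in l^\infty(A)/I_{T(A),\varpi}$, $$\|\pi_{F_1}(x)\|_{2,{F_1}_\varpi}=\inf\{\|\pi_{F_2}(x)+j\|_{2,{F_2}_\varpi}: j\in I_{F_1,\varpi}/I_{F_2,\varpi}\}\quad\text{and}\quad\|\pi_{F_2}(x)\|_{2,{F_2}_\varpi}=\inf\{\|x+k\|_{2,T(A)_\varpi}:k\in I_{F_2,\varpi}/I_{T(A),\varpi}\},$$ where $\pi_{F_i}:l^\infty(A)/I_{T(A),\varpi}\to l^\infty(A)/I_{F_i,\varpi}$ are the quotient maps. Then for all $x\in l^\infty(A)/I_{T(A),\varpi}$, $$\|\pi_{F_1}(x)\|_{2,{F_1}_\varpi}=\inf\{\|x+b\|_{2,T(A)_\varpi}: b\in I_{F_1,\varpi}/I_{T(A),\varpi}\}.$$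
   Context: Algebraically simple: simple and $A={\rm Ped}(A)$. Fix a free ultrafilter $\varpi$ on $\mathbb N$. For a set $S$ of traces, $\|a\|_{2,S}=\sup_{\tau\in S}\tau(a^*a)^{1/2}$, $I_{S,\varpi}=\{(a_n)\in l^\infty(A):\lim_{n\to\varpi}\|a_n\|_{2,S}=0\}$ and $\|(a_n)+I_{S,\varpi}\|_{2,S_\varpi}=\lim_{n\to\varpi}\|a_n\|_{2,S}$. *)

theory Defs
  imports "HOL-Analysis.Analysis"
begin

text \<open>A (possibly non-unital) C*-algebra on the type 'a: a real Banach algebra together with
  a complex scalar multiplication cs extending the real one, and an involution st satisfying the
  C*-identity.\<close>
definition cstar_algebra :: "(complex \<Rightarrow> 'a::{real_normed_algebra,banach} \<Rightarrow> 'a) \<Rightarrow> ('a \<Rightarrow> 'a) \<Rightarrow> bool" where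
  "cstar_algebra cs st \<longleftrightarrow>
     (\<forall>r x. cs (complex_of_real r) x = r *\<^sub>R x) \<and>
     (\<forall>c x y. cs c (x + y) = cs c x + cs c y) \<and>
     (\<forall>c d x. cs (c + d) x = cs c x + cs d x) \<and>
     (\<forall>c d x. cs (c * d) x = cs c (cs d x)) \<and>
     (\<forall>c x y. cs c (x * y) = cs c x * y \<and> cs c (x * y) = x * cs c y) \<and>
     (\<forall>c x. norm (cs c x) = cmod c * norm x) \<and>
     (\<forall>x. st (st x) = x) \<and>
     (\<forall>x y. st (x + y) = st x + st y) \<and>
     (\<forall>c x. st (cs c x) = cs (cnj c) (st x)) \<and>
     (\<forall>x y. st (x * y) = st y * st x) \<and>
     (\<forall>x. norm (st x * x) = (norm x)\<^sup>2)"

definition cideal :: "(complex \<Rightarrow> 'a::{real_normed_algebra,banach} \<Rightarrow> 'a) \<Rightarrow> 'a set \<Rightarrow> bool" where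
  "cideal cs I \<longleftrightarrow> 0 \<in> I \<and> (\<forall>x\<in>I. \<forall>y\<in>I. x + y \<in> I) \<and> (\<forall>c. \<forall>x\<in>I. cs c x \<in> I) \<and>
     (\<forall>x\<in>I. \<forall>a. a * x \<in> I \<and> x * a \<in> I)"

definition simple_calg :: "(complex \<Rightarrow> 'a::{real_normed_algebra,banach} \<Rightarrow> 'a) \<Rightarrow> bool" where
  "simple_calg cs \<longleftrightarrow> (UNIV :: 'a set) \<noteq> {0} \<and>
     (\<forall>I. cideal cs I \<and> closed I \<longrightarrow> I = {0} \<or> I = UNIV)"

definition pedersen_ideal :: "(complex \<Rightarrow> 'a::{real_normed_algebra,banach} \<Rightarrow> 'a) \<Rightarrow> 'a set" where
  "pedersen_ideal cs = \<Inter>{I. cideal cs I \<and> closure I = UNIV}"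

definition algebraically_simple :: "(complex \<Rightarrow> 'a::{real_normed_algebra,banach} \<Rightarrow> 'a) \<Rightarrow> bool" where
  "algebraically_simple cs \<longleftrightarrow> simple_calg cs \<and> pedersen_ideal cs = UNIV"

definition separable_space :: "'a::metric_space itself \<Rightarrow> bool" where
  "separable_space _ \<longleftrightarrow> (\<exists>D::'a set. countable D \<and> closure D = UNIV)"

definition tracial_states ::
  "(complex \<Rightarrow> 'a::{real_normed_algebra,banach} \<Rightarrow> 'a) \<Rightarrow> ('a \<Rightarrow> 'a) \<Rightarrow> ('a \<Rightarrow> complex) set" where
  "tracial_states cs st = {\<tau>. bounded_linear \<tau> \<and> (\<forall>c x. \<tau> (cs c x) = c * \<tau> x) \<and>
       (\<forall>x. Im (\<tau> (st x * x)) = 0 \<and> Re (\<tau> (st x * x)) \<ge> 0) \<and>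
       (\<forall>x. \<tau> (st x * x) = \<tau> (x * st x)) \<and>
       onorm \<tau> = 1}"

definition extreme_boundary :: "('a \<Rightarrow> complex) set \<Rightarrow> ('a \<Rightarrow> complex) set" where
  "extreme_boundary S = {\<tau>\<in>S. \<forall>\<sigma>\<in>S. \<forall>\<rho>\<in>S. \<forall>t::real. 0 < t \<and> t < 1 \<and>
       (\<forall>a. \<tau> a = complex_of_real t * \<sigma> a + complex_of_real (1 - t) * \<rho> a) \<longrightarrow> \<sigma> = \<rho>}"

definition free_ultrafilter :: "nat filter \<Rightarrow> bool" where
  "free_ultrafilter F \<longleftrightarrow> F \<noteq> bot \<and> (\<forall>P. eventually P F \<or> eventually (\<lambda>n. \<not> P n) F) \<and>
     F \<le> cofinite"

definition norm2 :: "('a::{real_normed_algebra,banach} \<Rightarrow> 'a) \<Rightarrow> ('a \<Rightarrow> complex) set \<Rightarrow> 'a \<Rightarrow> real" where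
  "norm2 st S a = Sup ({0} \<union> (\<lambda>\<tau>. sqrt (Re (\<tau> (st a * a)))) ` S)"

definition linfty :: "(nat \<Rightarrow> 'a::real_normed_vector) set" where
  "linfty = {a. bounded (range a)}"

text \<open>The seminorm on l^infty(A) inducing the norm of l^infty(A)/I_{S,varpi}:
  lim_{n -> varpi} ||a_n||_{2,S}.\<close>
definition unorm2 :: "nat filter \<Rightarrow> ('a::{real_normed_algebra,banach} \<Rightarrow> 'a) \<Rightarrow> ('a \<Rightarrow> complex) set \<Rightarrow> (nat \<Rightarrow> 'a) \<Rightarrow> real" where
  "unorm2 F st S a = Lim F (\<lambda>n. norm2 st S (a n))"

definition I_ideal :: "nat filter \<Rightarrow> ('a::{real_normed_algebra,banach} \<Rightarrow> 'a) \<Rightarrow> ('a \<Rightarrow> complex) set \<Rightarrow> (nat \<Rightarrow> 'a) set" where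
  "I_ideal F st S = {a \<in> linfty. unorm2 F st S a = 0}"

end

theory Submission
  imports Defs
begin

lemma norm2_bounds:
  assumes cs: "cstar_algebra cs st" and S: "S \<subseteq> tracial_states cs st"
  shows "0 \<le> norm2 st S a \<and> norm2 st S a \<le> norm a"
proof -
  have el: "sqrt (Re (\<tau> (st a * a))) \<le> norm a" if "\<tau> \<in> S" for \<tau>
  proof -
    have t: "bounded_linear \<tau>" "onorm \<tau> = 1" using that S unfolding tracial_states_def by auto
    have "Re (\<tau> (st a * a)) \<le> cmod (\<tau> (st a * a))" by (rule complex_Re_le_cmod)
    also have "\<dots> \<le> onorm \<tau> * norm (st a * a)" by (rule onorm[OF t(1)])
    also have "\<dots> = (norm a)\<^sup>2" using t(2) cs unfolding cstar_algebra_def by simp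
    finally have "sqrt (Re (\<tau> (st a * a))) \<le> sqrt ((norm a)\<^sup>2)" by (rule real_sqrt_le_mono)
    then show ?thesis by simp
  qed
  let ?A = "{0} \<union> (\<lambda>\<tau>. sqrt (Re (\<tau> (st a * a)))) ` S"
  have bdd: "bdd_above ?A" using el by (intro bdd_aboveI[of _ "norm a"]) auto
  have "0 \<le> Sup ?A" by (rule cSup_upper[OF _ bdd]) auto
  moreover have "Sup ?A \<le> norm a" by (rule cSup_least) (auto intro: el)
  ultimately show ?thesis unfolding norm2_def by simp
qed

lemma ultra_conv:
  fixes f :: "nat \<Rightarrow> real"
  assumes nb: "F \<noteq> bot" and ultra: "\<forall>P. eventually P F \<or> eventually (\<lambda>n. \<not> P n) F"
    and fb: "\<forall>n. f n \<in> {0..B}"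
  shows "\<exists>L\<in>{0..B}. (f \<longlongrightarrow> L) F"
proof -
  have c: "compact {0..B::real}" by simp
  have "filtermap f F \<noteq> bot" using nb by (simp add: filtermap_bot_iff)
  moreover have "eventually (\<lambda>y. y \<in> {0..B}) (filtermap f F)"
    using fb by (simp add: eventually_filtermap)
  ultimately obtain L where L: "L \<in> {0..B}" "inf (nhds L) (filtermap f F) \<noteq> bot"
    using c unfolding compact_filter by blast
  have "(f \<longlongrightarrow> L) F"
  proof (rule topological_tendstoI)
    fix U assume U: "open U" "L \<in> U"
    show "eventually (\<lambda>n. f n \<in> U) F"
    proof (rule ccontr)
      assume "\<not> eventually (\<lambda>n. f n \<in> U) F"
      then have e: "eventually (\<lambda>n. f n \<notin> U) F" using ultra by blast
      have "eventually (\<lambda>y. y \<in> U) (nhds L)" using U by (rule eventually_nhds_in_open)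
      moreover have "eventually (\<lambda>y. y \<notin> U) (filtermap f F)" using e by (simp add: eventually_filtermap)
      ultimately have "eventually (\<lambda>_. False) (inf (nhds L) (filtermap f F))"
        unfolding eventually_inf by blast
      then show False using L(2) by (simp add: eventually_False)
    qed
  qed
  then show ?thesis using L by blast
qed

lemma unorm2_nonneg:
  assumes cs: "cstar_algebra cs st" and S: "S \<subseteq> tracial_states cs st"
    and fu: "free_ultrafilter \<omega>" and a: "a \<in> linfty"
  shows "0 \<le> unorm2 \<omega> st S a"
proof -
  obtain B where B: "\<forall>n. norm (a n) \<le> B" using a unfolding linfty_def bounded_iff by auto
  have "norm2 st S (a n) \<in> {0..B}" for n using norm2_bounds[OF cs S, of "a n"] B[rule_format, of n] by auto
  then have "\<forall>n. norm2 st S (a n) \<in> {0..B}" by blast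
  moreover have "\<omega> \<noteq> bot" "\<forall>P. eventually P \<omega> \<or> eventually (\<lambda>n. \<not> P n) \<omega>"
    using fu unfolding free_ultrafilter_def by auto
  ultimately have "\<exists>L\<in>{0..B}. ((\<lambda>n. norm2 st S (a n)) \<longlongrightarrow> L) \<omega>"
    by (intro ultra_conv)
  then obtain L where L: "L \<in> {0..B}" "((\<lambda>n. norm2 st S (a n)) \<longlongrightarrow> L) \<omega>" by blast
  have "unorm2 \<omega> st S a = L" unfolding unorm2_def
    by (rule tendsto_Lim) (use fu L in \<open>auto simp: free_ultrafilter_def\<close>)
  then show ?thesis using L by simp
qed

lemma zero_in_I:
  assumes cs: "cstar_algebra cs st" and S: "S \<subseteq> tracial_states cs st"
    and fu: "free_ultrafilter \<omega>"
  shows "(\<lambda>n. 0) \<in> I_ideal \<omega> st S"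
proof -
  have "norm2 st S 0 = 0" using norm2_bounds[OF cs S, of 0] by simp
  moreover have "Lim \<omega> (\<lambda>n. 0::real) = 0"
    by (rule tendsto_Lim) (use fu in \<open>auto simp: free_ultrafilter_def\<close>)
  ultimately show ?thesis unfolding I_ideal_def unorm2_def linfty_def by simp
qed

lemma linfty_add: "x \<in> linfty \<Longrightarrow> y \<in> linfty \<Longrightarrow> (\<lambda>n. x n + y n) \<in> linfty"
proof -
  assume x: "x \<in> linfty" and y: "y \<in> linfty"
  obtain B where B: "\<forall>n. norm (x n) \<le> B" using x unfolding linfty_def bounded_iff by auto
  obtain C where C: "\<forall>n. norm (y n) \<le> C" using y unfolding linfty_def bounded_iff by auto
  have "norm (x n + y n) \<le> B + C" for n
    by (rule norm_triangle_le, rule add_mono) (use B C in auto)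
  then show ?thesis unfolding linfty_def bounded_iff by auto
qed

lemma linfty_neg: "x \<in> linfty \<Longrightarrow> (\<lambda>n. - x n) \<in> linfty"
  unfolding linfty_def bounded_iff by auto

lemma neg_in_I:
  assumes cs: "cstar_algebra cs st" and j: "j \<in> I_ideal \<omega> st S"
  shows "(\<lambda>n. - j n) \<in> I_ideal \<omega> st S"
proof -
  have add: "\<forall>x y. st (x + y) = st x + st y" using cs unfolding cstar_algebra_def by blast
  have "st 0 = 0" using add[rule_format, of 0 0] by simp
  then have "st y + st (- y) = 0" for y using add[rule_format, of y "- y"] by simp
  then have neg: "st (- y) = - st y" for y by (metis minus_unique)
  have "norm2 st S (- y) = norm2 st S y" for y unfolding norm2_def neg by simp
  then show ?thesis using j linfty_neg unfolding I_ideal_def unorm2_def by auto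
qed

theorem lemma3p13:
  fixes cs :: "complex \<Rightarrow> 'a::{real_normed_algebra,banach} \<Rightarrow> 'a"
    and st :: "'a \<Rightarrow> 'a"
    and \<omega> :: "nat filter"
    and F1 F2 :: "('a \<Rightarrow> complex) set"
  assumes "cstar_algebra cs st"
    and "separable_space TYPE('a)"
    and "algebraically_simple cs"
    and "tracial_states cs st \<noteq> {}"
    and "compact (tracial_states cs st)"
    and "free_ultrafilter \<omega>"
    and "compact F1" and "compact F2"
    and "F1 \<subseteq> F2" and "F2 \<subseteq> extreme_boundary (tracial_states cs st)"
    and "\<forall>x\<in>linfty. unorm2 \<omega> st F1 x =
           (INF j\<in>I_ideal \<omega> st F1. unorm2 \<omega> st F2 (\<lambda>n. x n + j n))"
    and "\<forall>x\<in>linfty. unorm2 \<omega> st F2 x =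
           (INF k\<in>I_ideal \<omega> st F2. unorm2 \<omega> st (tracial_states cs st) (\<lambda>n. x n + k n))"
  shows "\<forall>x\<in>linfty. unorm2 \<omega> st F1 x =
           (INF b\<in>I_ideal \<omega> st F1. unorm2 \<omega> st (tracial_states cs st) (\<lambda>n. x n + b n))"
proof
  note cs = assms(1) and fu = assms(6)
  note h1 = assms(11) and h2 = assms(12)
  define T where "T = tracial_states cs st"
  define I1 where "I1 = I_ideal \<omega> st F1"
  define I2 where "I2 = I_ideal \<omega> st F2"
  have F2T: "F2 \<subseteq> T" using assms(10) unfolding T_def extreme_boundary_def by auto
  have F1T: "F1 \<subseteq> T" using F2T assms(9) by auto
  have TT: "T \<subseteq> tracial_states cs st" unfolding T_def by simp
  have nn: "0 \<le> unorm2 \<omega> st S a" if "S \<subseteq> T" "a \<in> linfty" for S a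
    using unorm2_nonneg[OF cs _ fu that(2)] that(1) unfolding T_def by blast
  have I1l: "j \<in> linfty" if "j \<in> I1" for j using that unfolding I1_def I_ideal_def by auto
  have I2l: "j \<in> linfty" if "j \<in> I2" for j using that unfolding I2_def I_ideal_def by auto
  have z1: "(\<lambda>n. 0) \<in> I1" unfolding I1_def using zero_in_I[OF cs _ fu] F1T T_def by blast
  have z2: "(\<lambda>n. 0) \<in> I2" unfolding I2_def using zero_in_I[OF cs _ fu] F2T T_def by blast
  have bdd: "bdd_below ((\<lambda>b. unorm2 \<omega> st S (\<lambda>n. x n + b n)) ` I)"
    if "S \<subseteq> T" "x \<in> linfty" "\<And>b. b \<in> I \<Longrightarrow> b \<in> linfty" for S x I
    using nn[OF that(1) linfty_add[OF that(2) that(3)]] by (intro bdd_belowI[of _ 0]) auto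
  fix x :: "nat \<Rightarrow> 'a" assume x: "x \<in> linfty"
  have sum_I1: "(\<lambda>n. j n + k n) \<in> I1" if j: "j \<in> I1" and k: "k \<in> I2" for j k
  proof -
    have jk: "(\<lambda>n. j n + k n) \<in> linfty" using linfty_add I1l I2l j k by blast
    have mj: "(\<lambda>n. - j n) \<in> I1" using neg_in_I[OF cs] j unfolding I1_def by blast
    have "unorm2 \<omega> st F1 (\<lambda>n. j n + k n) =
          (INF j'\<in>I1. unorm2 \<omega> st F2 (\<lambda>n. (j n + k n) + j' n))"
      using h1 jk unfolding I1_def by blast
    also have "\<dots> \<le> unorm2 \<omega> st F2 (\<lambda>n. (j n + k n) + - j n)"
      by (rule cINF_lower[OF bdd[OF F2T jk I1l] mj])
    also have "(\<lambda>n. (j n + k n) + - j n) = k" by auto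
    also have "unorm2 \<omega> st F2 k = 0" using k unfolding I2_def I_ideal_def by auto
    finally have "unorm2 \<omega> st F1 (\<lambda>n. j n + k n) \<le> 0" .
    moreover have "0 \<le> unorm2 \<omega> st F1 (\<lambda>n. j n + k n)" using nn[OF F1T jk] .
    ultimately show ?thesis using jk unfolding I1_def I_ideal_def by auto
  qed
  have "unorm2 \<omega> st F1 x = (INF b\<in>I1. unorm2 \<omega> st T (\<lambda>n. x n + b n))"
  proof (rule antisym)
    show "unorm2 \<omega> st F1 x \<le> (INF b\<in>I1. unorm2 \<omega> st T (\<lambda>n. x n + b n))"
    proof (rule cINF_greatest)
      show "I1 \<noteq> {}" using z1 by blast
      fix b assume b: "b \<in> I1"
      have xb: "(\<lambda>n. x n + b n) \<in> linfty" using linfty_add x I1l b by blast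
      have "unorm2 \<omega> st F1 x = (INF j\<in>I1. unorm2 \<omega> st F2 (\<lambda>n. x n + j n))"
        using h1 x unfolding I1_def by blast
      also have "\<dots> \<le> unorm2 \<omega> st F2 (\<lambda>n. x n + b n)"
        by (rule cINF_lower[OF bdd[OF F2T x I1l] b])
      also have "\<dots> = (INF k\<in>I2. unorm2 \<omega> st T (\<lambda>n. (x n + b n) + k n))"
        using h2 xb unfolding I2_def T_def by blast
      also have "\<dots> \<le> unorm2 \<omega> st T (\<lambda>n. (x n + b n) + 0)"
        by (rule cINF_lower[OF bdd[OF order_refl xb I2l] z2])
      finally show "unorm2 \<omega> st F1 x \<le> unorm2 \<omega> st T (\<lambda>n. x n + b n)" by simp
    qed
  next
    have "(INF b\<in>I1. unorm2 \<omega> st T (\<lambda>n. x n + b n)) \<le> (INF j\<in>I1. unorm2 \<omega> st F2 (\<lambda>n. x n + j n))"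
    proof (rule cINF_greatest)
      show "I1 \<noteq> {}" using z1 by blast
      fix j assume j: "j \<in> I1"
      have xj: "(\<lambda>n. x n + j n) \<in> linfty" using linfty_add x I1l j by blast
      have "(INF b\<in>I1. unorm2 \<omega> st T (\<lambda>n. x n + b n)) \<le> (INF k\<in>I2. unorm2 \<omega> st T (\<lambda>n. (x n + j n) + k n))"
      proof (rule cINF_greatest)
        show "I2 \<noteq> {}" using z2 by blast
        fix k assume k: "k \<in> I2"
        have "(INF b\<in>I1. unorm2 \<omega> st T (\<lambda>n. x n + b n)) \<le> unorm2 \<omega> st T (\<lambda>n. x n + (j n + k n))"
          by (rule cINF_lower[OF bdd[OF order_refl x I1l] sum_I1[OF j k]])
        then show "(INF b\<in>I1. unorm2 \<omega> st T (\<lambda>n. x n + b n)) \<le> unorm2 \<omega> st T (\<lambda>n. (x n + j n) + k n)"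
          by (simp add: add.assoc)
      qed
      also have "\<dots> = unorm2 \<omega> st F2 (\<lambda>n. x n + j n)"
        using h2 xj unfolding I2_def T_def by metis
      finally show "(INF b\<in>I1. unorm2 \<omega> st T (\<lambda>n. x n + b n)) \<le> unorm2 \<omega> st F2 (\<lambda>n. x n + j n)" .
    qed
    also have "\<dots> = unorm2 \<omega> st F1 x" using h1 x unfolding I1_def by metis
    finally show "(INF b\<in>I1. unorm2 \<omega> st T (\<lambda>n. x n + b n)) \<le> unorm2 \<omega> st F1 x" .
  qed
  then show "unorm2 \<omega> st F1 x =
           (INF b\<in>I_ideal \<omega> st F1. unorm2 \<omega> st (tracial_states cs st) (\<lambda>n. x n + b n))"
    unfolding I1_def T_def .
qed

end
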